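(* Let $X\subseteq\mathbb{R}^n$ be compact, let $U_1,U_2\subseteq\mathbb{R}^m$ be compact, let $F:X\times(U_1\cup U_2)\to X$ be continuous, let $R:X\to[0,1]$ be Lipschitz with constant $L_R$, and let $\gamma\in[0,1)$. For $i=1,2$ define the Bellman operator on bounded functions $V:X\to\mathbb{R}$ by $$(\mathcal{T}_iV)(\mathbf{x})=\max_{\mathbf{u}\in U_i}\big[R(F(\mathbf{x},\mathbf{u}))+\gamma V(F(\mathbf{x},\mathbf{u}))\big],$$ and let $V_i^*$ be its unique bounded fixed point (the optimal value function of the discounted problem with action set $U_i$). Suppose $V_1^*$ and $V_2^*$ are Lipschitz with a common Lipschitz constant $L_V$. Then $$\|V_1^*-V_2^*\|_\infty\le\frac{L_R+\gamma L_V}{1-\gamma}\,\max_{\mathbf{x}\in X} d_S\big(\mathcal{R}_F(\mathbf{x},U_1),\mathcal{R}_F(\mathbf{x},U_2)\big).$$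
   Context: The reachable set of $F$ from $\mathbf{x}$ under an action set $U$ is $\mathcal{R}_F(\mathbf{x},U)=\{F(\mathbf{x},\mathbf{u}):\mathbf{u}\in U\}$. For $a\in\mathbb{R}^n$ and $M\subseteq\mathbb{R}^n$, $d(a,M)=\inf_{m\in M}\|a-m\|$; the Hausdorff distance between $M,N\subseteq\mathbb{R}^n$ is $d_S(M,N)=\max\{\sup_{m\in M}d(m,N),\ \sup_{n\in N}d(n,M)\}$. Norms are Euclidean. *)

theory Defs
  imports "HOL-Analysis.Analysis"
begin

definition reachable_set :: "('x \<Rightarrow> 'u \<Rightarrow> 'y) \<Rightarrow> 'x \<Rightarrow> 'u set \<Rightarrow> 'y set" where
  "reachable_set F x U = {F x u | u. u \<in> U}"

definition hausdorff_dist :: "'a::metric_space set \<Rightarrow> 'a set \<Rightarrow> real" where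
  "hausdorff_dist M N = max (SUP m\<in>M. infdist m N) (SUP n\<in>N. infdist n M)"

definition bellman ::
  "('x \<Rightarrow> 'u \<Rightarrow> 'x) \<Rightarrow> ('x \<Rightarrow> real) \<Rightarrow> real \<Rightarrow> 'u set \<Rightarrow> ('x \<Rightarrow> real) \<Rightarrow> 'x \<Rightarrow> real" where
  "bellman F R \<gamma> U V x = (SUP u\<in>U. R (F x u) + \<gamma> * V (F x u))"

end

theory Submission
  imports Defs
begin

lemma one_side:
  fixes X :: "'a::heine_borel set" and F :: "'a \<Rightarrow> 'b::topological_space \<Rightarrow> 'a" and R Va Vb :: "'a \<Rightarrow> real"
  assumes x: "x \<in> X" and bX: "bounded X"
    and Ua: "Ua \<noteq> {}" and Ub: "compact Ub" "Ub \<noteq> {}"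
    and Fc: "continuous_on Ub (F x)"
    and Fa: "\<And>u. u \<in> Ua \<Longrightarrow> F x u \<in> X"
    and Fb: "\<And>u. u \<in> Ub \<Longrightarrow> F x u \<in> X"
    and Rl: "L_R-lipschitz_on X R" and Val: "L_V-lipschitz_on X Va"
    and R1: "\<And>y. y \<in> X \<Longrightarrow> R y \<le> 1"
    and Bb: "\<And>y. y \<in> X \<Longrightarrow> Vb y \<le> B"
    and g: "0 \<le> \<gamma>"
    and Vax: "Va x = (SUP u\<in>Ua. R (F x u) + \<gamma> * Va (F x u))"
    and Vbx: "Vb x = (SUP u\<in>Ub. R (F x u) + \<gamma> * Vb (F x u))"
    and M: "\<And>y. y \<in> X \<Longrightarrow> \<bar>Va y - Vb y\<bar> \<le> M"
    and D: "\<And>u. u \<in> Ua \<Longrightarrow> infdist (F x u) (F x ` Ub) \<le> D"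
  shows "Va x - Vb x \<le> (L_R + \<gamma> * L_V) * D + \<gamma> * M"
proof -
  have LR: "0 \<le> L_R" and LV: "0 \<le> L_V" using Rl Val by (auto simp: lipschitz_on_def)
  have cl: "closed (F x ` Ub)" using compact_continuous_image[OF Fc Ub(1)] compact_imp_closed by blast
  have bdd: "bdd_above ((\<lambda>u. R (F x u) + \<gamma> * Vb (F x u)) ` Ub)"
  proof (rule bdd_aboveI2)
    fix u assume "u \<in> Ub"
    hence "F x u \<in> X" by (rule Fb)
    thus "R (F x u) + \<gamma> * Vb (F x u) \<le> 1 + \<gamma> * B"
      using R1 Bb g by (simp add: add_mono mult_left_mono)
  qed
  have "Va x \<le> Vb x + ((L_R + \<gamma> * L_V) * D + \<gamma> * M)"
    unfolding Vax
  proof (rule cSUP_least[OF Ua])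
    fix u assume u: "u \<in> Ua"
    define y1 where "y1 = F x u"
    have y1X: "y1 \<in> X" using Fa u y1_def by simp
    obtain y2 where y2: "y2 \<in> F x ` Ub" and dy: "infdist y1 (F x ` Ub) = dist y1 y2"
      using infdist_attains_inf[OF cl] Ub(2) by blast
    obtain u2 where u2: "u2 \<in> Ub" and y2e: "y2 = F x u2" using y2 by blast
    have y2X: "y2 \<in> X" using Fb u2 y2e by simp
    have dD: "dist y1 y2 \<le> D" using D[OF u] dy y1_def by simp
    have "dist (R y1) (R y2) \<le> L_R * dist y1 y2" using Rl y1X y2X by (auto simp: lipschitz_on_def)
    hence r: "R y1 \<le> R y2 + L_R * dist y1 y2" by (simp add: dist_real_def)
    have "dist (Va y1) (Va y2) \<le> L_V * dist y1 y2" using Val y1X y2X by (auto simp: lipschitz_on_def)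
    hence v: "Va y1 \<le> Va y2 + L_V * dist y1 y2" by (simp add: dist_real_def)
    have m: "Va y2 \<le> Vb y2 + M" using M[OF y2X] by simp
    have v2: "Va y1 \<le> Vb y2 + M + L_V * D"
      using v m mult_left_mono[OF dD LV] by linarith
    have s: "R y2 + \<gamma> * Vb y2 \<le> Vb x"
      unfolding Vbx y2e using cSUP_upper[OF u2 bdd] .
    have "R y1 + \<gamma> * Va y1 \<le> R y2 + L_R * D + \<gamma> * (Vb y2 + M + L_V * D)"
      using r mult_left_mono[OF dD LR] mult_left_mono[OF v2 g] by linarith
    also have "\<dots> = (R y2 + \<gamma> * Vb y2) + ((L_R + \<gamma> * L_V) * D + \<gamma> * M)"
      by (simp add: algebra_simps)
    also have "\<dots> \<le> Vb x + ((L_R + \<gamma> * L_V) * D + \<gamma> * M)" using s by simp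
    finally show "R (F x u) + \<gamma> * Va (F x u) \<le> Vb x + ((L_R + \<gamma> * L_V) * D + \<gamma> * M)"
      by (simp add: y1_def)
  qed
  thus ?thesis by simp
qed

theorem lemma1:
  fixes X :: "(real ^ 'n) set"
    and U1 U2 :: "(real ^ 'm) set"
    and F :: "real ^ 'n \<Rightarrow> real ^ 'm \<Rightarrow> real ^ 'n"
    and R :: "real ^ 'n \<Rightarrow> real"
    and V1 V2 :: "real ^ 'n \<Rightarrow> real"
    and L_R L_V \<gamma> :: real
  assumes X: "compact X" "X \<noteq> {}"
    and U1: "compact U1" "U1 \<noteq> {}"
    and U2: "compact U2" "U2 \<noteq> {}"
    and F_cont: "continuous_on (X \<times> (U1 \<union> U2)) (\<lambda>(x, u). F x u)"
    and F_maps: "\<And>x u. x \<in> X \<Longrightarrow> u \<in> U1 \<union> U2 \<Longrightarrow> F x u \<in> X"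
    and R_range: "\<And>x. x \<in> X \<Longrightarrow> R x \<in> {0..1}"
    and R_lip: "L_R-lipschitz_on X R"
    and gamma: "0 \<le> \<gamma>" "\<gamma> < 1"
    and V1_bdd: "bounded (V1 ` X)"
    and V1_fix: "\<And>x. x \<in> X \<Longrightarrow> bellman F R \<gamma> U1 V1 x = V1 x"
    and V2_bdd: "bounded (V2 ` X)"
    and V2_fix: "\<And>x. x \<in> X \<Longrightarrow> bellman F R \<gamma> U2 V2 x = V2 x"
    and V1_lip: "L_V-lipschitz_on X V1"
    and V2_lip: "L_V-lipschitz_on X V2"
  shows "(SUP x\<in>X. \<bar>V1 x - V2 x\<bar>)
           \<le> (L_R + \<gamma> * L_V) / (1 - \<gamma>)
              * (SUP x\<in>X. hausdorff_dist (reachable_set F x U1) (reachable_set F x U2))"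
proof -
  have bX: "bounded X" using X compact_imp_bounded by blast
  define hd where "hd x = hausdorff_dist (F x ` U1) (F x ` U2)" for x
  have rs: "reachable_set F x U = F x ` U" for x U by (auto simp: reachable_set_def)
  define M where "M = (SUP x\<in>X. \<bar>V1 x - V2 x\<bar>)"
  define D where "D = (SUP x\<in>X. hd x)"
  obtain B1 where B1: "\<And>y. y \<in> X \<Longrightarrow> \<bar>V1 y\<bar> \<le> B1"
    using V1_bdd by (auto simp: bounded_real)
  obtain B2 where B2: "\<And>y. y \<in> X \<Longrightarrow> \<bar>V2 y\<bar> \<le> B2"
    using V2_bdd by (auto simp: bounded_real)
  have bddM: "bdd_above ((\<lambda>x. \<bar>V1 x - V2 x\<bar>) ` X)"
  proof (rule bdd_aboveI2)
    fix x assume "x \<in> X" thus "\<bar>V1 x - V2 x\<bar> \<le> B1 + B2" using B1 B2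
      by (smt (verit))
  qed
  have Mx: "\<And>y. y \<in> X \<Longrightarrow> \<bar>V1 y - V2 y\<bar> \<le> M"
    unfolding M_def using cSUP_upper[OF _ bddM] by blast
  have Fc: "continuous_on U x \<Longrightarrow> True" for U x by simp
  have Fcx: "continuous_on U (F x)" if "x \<in> X" "U \<subseteq> U1 \<union> U2" for x U
  proof -
    have "continuous_on U (\<lambda>u. (x, u))" by (intro continuous_intros)
    moreover have "(\<lambda>u. (x, u)) ` U \<subseteq> X \<times> (U1 \<union> U2)" using that by auto
    ultimately have "continuous_on U ((\<lambda>(x, u). F x u) \<circ> (\<lambda>u. (x, u)))"
      by (intro continuous_on_compose continuous_on_subset[OF F_cont])
    thus ?thesis by (simp add: o_def)
  qed
  have inf_le: "infdist m N \<le> diameter X" if hm: "m \<in> X" "N \<subseteq> X" "N \<noteq> {}" for m N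
  proof -
    obtain n where "n \<in> N" using hm by blast
    hence "infdist m N \<le> dist m n" by (rule infdist_le)
    also have "\<dots> \<le> diameter X" using diameter_bounded_bound[OF bX] hm \<open>n \<in> N\<close> by blast
    finally show ?thesis .
  qed
  have bdd_inf: "bdd_above ((\<lambda>m. infdist m N) ` A)" if "A \<subseteq> X" "N \<subseteq> X" "N \<noteq> {}" for A N
    using inf_le that by (intro bdd_aboveI2) blast
  have imgX: "F x ` U1 \<subseteq> X" "F x ` U2 \<subseteq> X" if "x \<in> X" for x
    using F_maps that by auto
  have hd_le: "hd x \<le> diameter X" if "x \<in> X" for x
    unfolding hd_def hausdorff_dist_def
    using imgX[OF that] U1(2) U2(2)
    by (intro max.boundedI cSUP_least) (auto intro!: inf_le)
  have bddD: "bdd_above (hd ` X)" using hd_le by (intro bdd_aboveI2) blast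
  have infD1: "infdist (F x u) (F x ` U2) \<le> D" if "x \<in> X" "u \<in> U1" for x u
  proof -
    have "infdist (F x u) (F x ` U2) \<le> (SUP m\<in>F x ` U1. infdist m (F x ` U2))"
      using that imgX[OF that(1)] U2(2) by (intro cSUP_upper bdd_inf) auto
    also have "\<dots> \<le> hd x" unfolding hd_def hausdorff_dist_def by simp
    also have "\<dots> \<le> D" unfolding D_def using cSUP_upper[OF that(1) bddD] .
    finally show ?thesis .
  qed
  have infD2: "infdist (F x u) (F x ` U1) \<le> D" if "x \<in> X" "u \<in> U2" for x u
  proof -
    have "infdist (F x u) (F x ` U1) \<le> (SUP m\<in>F x ` U2. infdist m (F x ` U1))"
      using that imgX[OF that(1)] U1(2) by (intro cSUP_upper bdd_inf) auto
    also have "\<dots> \<le> hd x" unfolding hd_def hausdorff_dist_def by simp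
    also have "\<dots> \<le> D" unfolding D_def using cSUP_upper[OF that(1) bddD] .
    finally show ?thesis .
  qed
  have R1: "\<And>y. y \<in> X \<Longrightarrow> R y \<le> 1" using R_range by auto
  have step: "\<bar>V1 x - V2 x\<bar> \<le> (L_R + \<gamma> * L_V) * D + \<gamma> * M" if x: "x \<in> X" for x
  proof -
    have a: "V1 x - V2 x \<le> (L_R + \<gamma> * L_V) * D + \<gamma> * M"
      apply (rule one_side[where X=X and F=F and Ua=U1 and Ub=U2 and R=R and B=B2])
      using x bX U1 U2 Fcx[OF x] F_maps R_lip V1_lip R1 B2 gamma Mx infD1
        V1_fix[OF x] V2_fix[OF x]
      by (auto simp: bellman_def abs_le_iff)
    have b: "V2 x - V1 x \<le> (L_R + \<gamma> * L_V) * D + \<gamma> * M"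
      apply (rule one_side[where X=X and F=F and Ua=U2 and Ub=U1 and R=R and B=B1])
      using x bX U1 U2 Fcx[OF x] F_maps R_lip V2_lip R1 B1 gamma Mx infD2
        V1_fix[OF x] V2_fix[OF x]
      by (auto simp: bellman_def abs_le_iff abs_minus_commute)
    show ?thesis using a b by linarith
  qed
  have "M \<le> (L_R + \<gamma> * L_V) * D + \<gamma> * M"
    unfolding M_def[symmetric, THEN sym] M_def
    using step X(2) by (intro cSUP_least) (auto simp: M_def)
  hence "M * (1 - \<gamma>) \<le> (L_R + \<gamma> * L_V) * D" by (simp add: algebra_simps)
  hence "M \<le> (L_R + \<gamma> * L_V) * D / (1 - \<gamma>)" using gamma by (simp add: pos_le_divide_eq)
  thus ?thesis unfolding M_def D_def hd_def rs by (simp add: field_simps)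
qed

end
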